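(* Let $F\subsetneq K$ be fields of characteristic $0$, with $F$ a proper nonempty subfield of $K$. Let $p(x)=\sum_{k=0}^{n}a_k x^k\in K[x]$ be non-constant with $a_n\neq 0$, and let $q(x)=\sum_{j=0}^{m}b_j x^j\in K[x]\setminus F[x]$ with $b_m\neq 0$. Suppose $a_n,b_m\in F$ and $b_j\notin F$ for some $j\geq 1$. Then $p\circ q\notin F[x]$ and $D_F(p\circ q)=D_F(q)$.
   Context: For sets $F\subset K$ and $p(x)=\sum_{k=0}^{n}a_kx^k\in K[x]$ with $a_n\neq 0$, the $F$ deficit $D_F(p)$ is defined as follows: if $p\in K[x]\setminus F[x]$, then $D_F(p)=n-\max\{0\le k\le n: a_k\notin F\}$; if $p\in F[x]$, then $D_F(p)=n$. Here $F[x]$ denotes the set of polynomials with all coefficients in $F$. *)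

theory Defs
  imports "HOL-Computational_Algebra.Polynomial"
begin

definition is_subfield :: "'k::field set \<Rightarrow> bool" where
  "is_subfield F \<longleftrightarrow> 0 \<in> F \<and> 1 \<in> F \<and>
     (\<forall>x\<in>F. \<forall>y\<in>F. x + y \<in> F \<and> x * y \<in> F) \<and>
     (\<forall>x\<in>F. - x \<in> F) \<and> (\<forall>x\<in>F. x \<noteq> 0 \<longrightarrow> inverse x \<in> F)"

definition in_polys_over :: "'k::zero poly \<Rightarrow> 'k set \<Rightarrow> bool" where
  "in_polys_over p F \<longleftrightarrow> (\<forall>k. coeff p k \<in> F)"

definition deficit :: "'k::zero set \<Rightarrow> 'k poly \<Rightarrow> nat" where
  "deficit F p = (if in_polys_over p F then degree p
                  else degree p - Max {k. k \<le> degree p \<and> coeff p k \<notin> F})"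

end

theory Submission
  imports Defs
begin

lemma pcompose_monom_gen: "pcompose (monom a n) q = smult a (q ^ n)"
  by (induction n) (simp_all add: monom_Suc monom_0 pcompose_pCons pcompose_const)

context
  fixes F :: "'k::field set"
  assumes sf: "is_subfield F"
begin

lemma F0: "0 \<in> F" and F1: "1 \<in> F" and Fadd: "x \<in> F \<Longrightarrow> y \<in> F \<Longrightarrow> x + y \<in> F"
  and Fmul: "x \<in> F \<Longrightarrow> y \<in> F \<Longrightarrow> x * y \<in> F" and Fneg: "x \<in> F \<Longrightarrow> - x \<in> F"
  and Finv: "x \<in> F \<Longrightarrow> inverse x \<in> F"
  using sf unfolding is_subfield_def by (auto simp: inverse_zero)

lemma Fsum: "(\<And>x. x \<in> A \<Longrightarrow> f x \<in> F) \<Longrightarrow> sum f A \<in> F"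
proof (induction A rule: infinite_finite_induct)
  case (infinite A) then show ?case by (simp add: F0)
next
  case empty then show ?case by (simp add: F0)
next
  case (insert x A) then show ?case by (simp add: Fadd)
qed

lemma Fnat: "of_nat n \<in> F"
  by (induction n) (simp_all add: F0 F1 Fadd)

lemma Fpow: "x \<in> F \<Longrightarrow> x ^ n \<in> F"
  by (induction n) (simp_all add: F1 Fmul)

lemma Fdiff: "x \<in> F \<Longrightarrow> y \<in> F \<Longrightarrow> x - y \<in> F"
  using Fadd Fneg by (metis diff_conv_add_uminus)

lemma Fadd_not: "x \<in> F \<Longrightarrow> y \<notin> F \<Longrightarrow> x + y \<notin> F"
  using Fdiff[of "x + y" x] by auto

lemma Fmul_not: "x \<in> F \<Longrightarrow> x \<noteq> 0 \<Longrightarrow> y \<notin> F \<Longrightarrow> x * y \<notin> F"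
  using Fmul[of "inverse x" "x * y"] Finv[of x] by (auto simp: field_simps)

lemma polys_mult: "in_polys_over p F \<Longrightarrow> in_polys_over q F \<Longrightarrow> in_polys_over (p * q) F"
  unfolding in_polys_over_def coeff_mult by (auto intro!: Fsum Fmul)

lemma polys_pow: "in_polys_over p F \<Longrightarrow> in_polys_over (p ^ n) F"
proof (induction n)
  case 0 then show ?case by (simp add: in_polys_over_def coeff_1 F0 F1)
next
  case (Suc n) then show ?case using polys_mult[of p "p ^ n"] by simp
qed

end

theorem theorem2:
  fixes F :: "'k::field set" and p q :: "'k poly"
  assumes "CHAR('k) = 0"
    and "is_subfield F" and "F \<noteq> UNIV"
    and "degree p \<ge> 1"
    and "\<not> in_polys_over q F"
    and "lead_coeff p \<in> F" and "lead_coeff q \<in> F"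
    and "\<exists>j\<ge>1. coeff q j \<notin> F"
  shows "\<not> in_polys_over (pcompose p q) F \<and> deficit F (pcompose p q) = deficit F q"
proof -
  note sf = assms(2)
  define n where "n = degree p"
  define m where "m = degree q"
  define a where "a = lead_coeff p"
  define b where "b = lead_coeff q"
  define n' where "n' = n - 1"
  have nn: "n = Suc n'" using assms(4) n_def n'_def by simp
  have aF: "a \<in> F" and bF: "b \<in> F" using assms(6,7) a_def b_def by auto
  have p0: "p \<noteq> 0" using assms(4) by auto
  have a0: "a \<noteq> 0" using p0 a_def by simp
  have q0: "q \<noteq> 0" using assms(5) F0[OF sf] by (auto simp: in_polys_over_def)
  have b0: "b \<noteq> 0" using q0 b_def by simp
  obtain j where j: "j \<ge> 1" "coeff q j \<notin> F" using assms(8) by auto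
  have jm: "j \<le> m" using j(2) F0[OF sf] m_def by (metis coeff_eq_0 not_le)
  define S where "S = {k. k \<le> m \<and> coeff q k \<notin> F}"
  define r where "r = Max S"
  have finS: "finite S" unfolding S_def by auto
  have jS: "j \<in> S" using j jm S_def by auto
  have rS: "r \<in> S" using finS jS r_def Max_in by blast
  have jr: "j \<le> r" using finS jS r_def by simp
  have r1: "r \<ge> 1" using jr j by simp
  have rm: "r < m" using rS bF b_def m_def S_def by (cases "r = m") auto
  have above: "coeff q k \<in> F" if "k > r" for k
  proof (cases "k \<le> m")
    case True
    then have "k \<notin> S" using that finS r_def Max_ge not_le by blast
    then show ?thesis using True S_def by auto
  next
    case False
    then show ?thesis using F0[OF sf] m_def by (simp add: coeff_eq_0)
  qed
  define c where "c = coeff q r"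
  have cF: "c \<notin> F" using rS S_def c_def by auto
  have defq: "deficit F q = m - r"
    using assms(5) unfolding deficit_def m_def r_def S_def by simp
  define R where "R = (\<Sum>k\<le>r. monom (coeff q k) k)"
  have coeffR: "coeff R k = (if k \<le> r then coeff q k else 0)" for k
    unfolding R_def coeff_sum coeff_monom by (simp add: sum.delta)
  define Q where "Q = q - R"
  have coeffQ: "coeff Q k = (if k \<le> r then 0 else coeff q k)" for k
    unfolding Q_def by (simp add: coeffR)
  have QF: "in_polys_over Q F"
    unfolding in_polys_over_def coeffQ using above F0[OF sf] by auto
  have degQ: "degree Q = m"
  proof (rule antisym)
    show "degree Q \<le> m" by (rule degree_le) (simp add: coeffQ m_def coeff_eq_0)
    show "m \<le> degree Q" by (rule le_degree) (use rm b0 in \<open>simp add: coeffQ b_def m_def\<close>)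
  qed
  have lcQ: "lead_coeff Q = b" using degQ rm by (simp add: coeffQ b_def m_def)
  have Q0: "Q \<noteq> 0" using lcQ b0 by auto
  have degR: "degree R = r"
  proof (rule antisym)
    show "degree R \<le> r" by (rule degree_le) (simp add: coeffR)
    show "r \<le> degree R" by (rule le_degree) (use cF F0[OF sf] in \<open>auto simp: coeffR c_def\<close>)
  qed
  have lcR: "lead_coeff R = c" using degR by (simp add: coeffR c_def)
  define T where "T = (\<Sum>i<n. Q^(n - Suc i) * q^i)"
  have qQ: "q - Q = R" unfolding Q_def by simp
  have powdiff: "q^n - Q^n = R * T"
    unfolding T_def using power_diff_sumr2[of q n Q] qQ by simp
  have term_deg: "degree (Q^(n - Suc i) * q^i) = n' * m" if "i < n" for i
  proof -
    have "degree (Q^(n - Suc i) * q^i) = (n - Suc i) * m + i * m"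
      using Q0 q0 degQ by (simp add: degree_mult_eq degree_power_eq m_def)
    also have "\<dots> = n' * m" using that nn by (simp add: add_mult_distrib[symmetric])
    finally show ?thesis .
  qed
  have term_lc: "coeff (Q^(n - Suc i) * q^i) (n' * m) = b ^ n'" if "i < n" for i
  proof -
    have "coeff (Q^(n - Suc i) * q^i) (n' * m) = lead_coeff (Q^(n - Suc i) * q^i)"
      using term_deg[OF that] by simp
    also have "\<dots> = b ^ (n - Suc i) * b ^ i"
      by (simp add: lead_coeff_mult lead_coeff_power lcQ b_def)
    also have "\<dots> = b ^ n'" using that nn by (simp add: power_add[symmetric])
    finally show ?thesis .
  qed
  have coeffT: "coeff T (n' * m) = of_nat n * b ^ n'"
    unfolding T_def coeff_sum using term_lc by simp
  have degT_le: "degree T \<le> n' * m"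
    unfolding T_def by (rule degree_sum_le) (auto simp: term_deg)
  have nz: "of_nat n * b ^ n' \<noteq> (0::'k)"
  proof -
    have "of_nat n \<noteq> (0::'k)" using assms(1) nn CHAR_eq0_iff[where 'a='k] by (metis zero_less_Suc)
    then show ?thesis using b0 by simp
  qed
  have degT: "degree T = n' * m"
    using degT_le le_degree[of T "n' * m"] coeffT nz by simp
  define e where "e = r + n' * m"
  have RT_hi: "coeff (R * T) k = 0" if "k > e" for k
    using that degree_mult_le[of R T] degR degT e_def by (intro coeff_eq_0) simp
  have RT_e: "coeff (R * T) e = c * (of_nat n * b ^ n')"
    using coeff_mult_degree_sum[of R T] degR degT coeffT lcR e_def by simp
  define p0 where "p0 = p - monom a n"
  have degp0: "degree p0 \<le> n'"
  proof (rule degree_le, intro allI impI)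
    fix i assume "n' < i"
    then have "i \<ge> n" using nn by simp
    then show "coeff p0 i = 0" unfolding p0_def
      by (cases "i = n") (simp_all add: coeff_monom a_def n_def coeff_eq_0)
  qed
  have degp0q: "degree (pcompose p0 q) \<le> n' * m"
    using degp0 by (simp add: degree_pcompose m_def)
  have decomp: "pcompose p q = smult a (Q^n) + smult a (R * T) + pcompose p0 q"
  proof -
    have "p = monom a n + p0" unfolding p0_def by simp
    then have "pcompose p q = smult a (q ^ n) + pcompose p0 q"
      by (metis pcompose_add pcompose_monom_gen)
    also have "q ^ n = Q ^ n + R * T" using powdiff by (simp add: algebra_simps)
    finally show ?thesis by (simp add: smult_add_right)
  qed
  have QnF: "coeff (Q^n) k \<in> F" for k
    using polys_pow[OF sf QF] by (simp add: in_polys_over_def)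
  have en: "n' * m < e" using r1 e_def by simp
  define N where "N = n * m"
  have eN: "e < N" using rm nn e_def N_def by simp
  have Ne: "N - e = m - r" using rm nn e_def N_def by simp
  have degpq: "degree (pcompose p q) = N"
    by (simp add: degree_pcompose N_def n_def m_def)
  have hi: "coeff (pcompose p q) k \<in> F" if "k > e" for k
  proof -
    have "coeff (pcompose p0 q) k = 0" using degp0q en that by (intro coeff_eq_0) simp
    then show ?thesis using that RT_hi Fmul[OF sf aF QnF] by (simp add: decomp)
  qed
  have ate: "coeff (pcompose p q) e \<notin> F"
  proof -
    have z: "coeff (pcompose p0 q) e = 0" using degp0q en by (intro coeff_eq_0) simp
    have f1: "a * (of_nat n * b ^ n') \<in> F"
      using Fmul[OF sf aF Fmul[OF sf Fnat[OF sf] Fpow[OF sf bF]]] .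
    have f2: "a * (of_nat n * b ^ n') \<noteq> 0" using a0 nz by simp
    have "a * (of_nat n * b ^ n') * c \<notin> F" using Fmul_not[OF sf f1 f2 cF] .
    then have "a * (c * (of_nat n * b ^ n')) \<notin> F" by (simp add: ac_simps)
    then have "a * coeff (Q^n) e + a * (c * (of_nat n * b ^ n')) \<notin> F"
      using Fadd_not[OF sf Fmul[OF sf aF QnF]] by blast
    then show ?thesis using z RT_e by (simp add: decomp)
  qed
  have notin: "\<not> in_polys_over (pcompose p q) F"
    using ate by (auto simp: in_polys_over_def)
  have Mx: "Max {k. k \<le> degree (pcompose p q) \<and> coeff (pcompose p q) k \<notin> F} = e"
  proof (rule Max_eqI)
    show "finite {k. k \<le> degree (pcompose p q) \<and> coeff (pcompose p q) k \<notin> F}" by simp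
    show "e \<in> {k. k \<le> degree (pcompose p q) \<and> coeff (pcompose p q) k \<notin> F}"
      using ate eN degpq by simp
    fix y assume "y \<in> {k. k \<le> degree (pcompose p q) \<and> coeff (pcompose p q) k \<notin> F}"
    then show "y \<le> e" using hi not_le by blast
  qed
  show ?thesis using notin Mx degpq Ne defq by (simp add: deficit_def)
qed
end
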